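(* Let $\Omega$ be a non-empty bounded open subset of $\mathbf{R}^n$ and let $f:\Omega\to\mathbf{R}^n$ be a $C^1$ function. Then at least one of the following holds: (e1) $f$ satisfies the convex hull-like property in $\Omega$; (e2) there exists a non-empty open set $X\subseteq\Omega$ with $\overline{X}\subseteq\Omega$ such that for every continuous function $g:\Omega\to\mathbf{R}^n$ which is $C^1$ in $X$, there exists $\tilde\lambda\ge0$ such that for each $\lambda>\tilde\lambda$ one has $\det(J_{g+\lambda f}(\hat x))=0$ for some $\hat x\in X$.
   Context: $\det(J_h(x))$ denotes the Jacobian determinant of a $C^1$ map $h$ at $x$. A function $\psi:\mathbf{R}^n\to\mathbf{R}$ is quasi-convex if for each $r\in\mathbf{R}$ the set $\psi^{-1}(]-\infty,r])$ is convex. A continuous function $f:\Omega\to\mathbf{R}^n$ satisfies the convex hull-like property in $\Omega$ if for every continuous quasi-convex $\psi:\mathbf{R}^n\to\mathbf{R}$ there exists $x^*\in\partial\Omega$ such that $\limsup_{x\to x^*,\,x\in\Omega}\psi(f(x))=\sup_{x\in\Omega}\psi(f(x))$. *)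

theory Defs
  imports "HOL-Analysis.Analysis"
begin

definition C1_on :: "('a::real_normed_vector \<Rightarrow> 'b::real_normed_vector) \<Rightarrow> 'a set \<Rightarrow> bool" where
  "C1_on f S \<longleftrightarrow> (\<exists>f' :: 'a \<Rightarrow> 'a \<Rightarrow>\<^sub>L 'b.
       (\<forall>x\<in>S. (f has_derivative blinfun_apply (f' x)) (at x)) \<and> continuous_on S f')"

definition jacobian_det :: "(real^'n \<Rightarrow> real^'n) \<Rightarrow> real^'n \<Rightarrow> real" where
  "jacobian_det h x = det (matrix (frechet_derivative h (at x)))"

definition quasi_convex :: "('a::real_vector \<Rightarrow> real) \<Rightarrow> bool" where
  "quasi_convex \<psi> \<longleftrightarrow> (\<forall>r. convex {y. \<psi> y \<le> r})"

definition convex_hull_like :: "(real^'n \<Rightarrow> real^'n) \<Rightarrow> (real^'n) set \<Rightarrow> bool" where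
  "convex_hull_like f \<Omega> \<longleftrightarrow>
     (\<forall>\<psi> :: real^'n \<Rightarrow> real. continuous_on UNIV \<psi> \<and> quasi_convex \<psi> \<longrightarrow>
        (\<exists>xs\<in>frontier \<Omega>.
           Limsup (at xs within \<Omega>) (\<lambda>x. ereal (\<psi> (f x))) = (SUP x\<in>\<Omega>. ereal (\<psi> (f x)))))"

end

theory Submission imports Defs begin

lemma right_inv_det:
  fixes D :: "real^'n \<Rightarrow> real^'n"
  assumes "linear D" "det (matrix D) \<noteq> 0"
  shows "\<exists>g. bounded_linear g \<and> D \<circ> g = id"
proof -
  have "inj D" using assms det_nz_iff_inj by blast
  then obtain g where "linear g" "\<forall>x. g (D x) = x" "\<forall>x. D (g x) = x"
    using linear_injective_isomorphism[OF assms(1)] by metis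
  then show ?thesis by (auto simp: linear_conv_bounded_linear fun_eq_iff)
qed

lemma frontier_hit:
  fixes V :: "(real^'n) set" and e y :: "real^'n"
  assumes "open V" "bounded V" "y \<in> V" "e \<noteq> 0"
  shows "\<exists>a>0. y + a *\<^sub>R e \<in> frontier V"
proof -
  obtain R where R: "\<forall>v\<in>V. norm v \<le> R" using assms(2) bounded_iff by blast
  define t where "t = (R + norm y + 1) / norm e"
  have "R \<ge> 0" using R assms(3) norm_ge_zero order.trans by metis
  then have tpos: "t > 0" using assms(4) unfolding t_def
    by (intro divide_pos_pos) (auto intro: add_nonneg_pos)
  have "norm (t *\<^sub>R e) \<le> norm (y + t *\<^sub>R e) + norm y"
    using norm_triangle_ineq4[of "y + t *\<^sub>R e" y] by simp
  then have "norm (y + t *\<^sub>R e) \<ge> t * norm e - norm y" using tpos by simp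
  also have "t * norm e = R + norm y + 1" using assms(4) by (simp add: t_def)
  finally have "y + t *\<^sub>R e \<notin> V" using R by force
  then have "closed_segment y (y + t *\<^sub>R e) \<inter> frontier V \<noteq> {}"
    using assms(3) by (intro connected_Int_frontier) auto
  then obtain p where p: "p \<in> closed_segment y (y + t *\<^sub>R e)" "p \<in> frontier V" by blast
  then obtain u where u: "0 \<le> u" "u \<le> 1" "p = (1 - u) *\<^sub>R y + u *\<^sub>R (y + t *\<^sub>R e)"
    by (auto simp: in_segment)
  have pe: "p = y + (u*t) *\<^sub>R e" using u(3) by (simp add: algebra_simps)
  moreover have "p \<noteq> y" using p(2) assms(1,3) by (metis frontier_disjoint_eq disjoint_iff)
  ultimately have "u*t \<noteq> 0" by auto
  then have "u*t > 0" using u tpos by (simp add: less_le)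
  with pe p(2) show ?thesis by blast
qed

lemma qc_bound:
  fixes V :: "(real^'n) set" and \<psi> :: "real^'n \<Rightarrow> real"
  assumes "open V" "bounded V" "y \<in> V" "quasi_convex \<psi>" "\<forall>p\<in>frontier V. \<psi> p < c"
  shows "\<psi> y < c"
proof -
  obtain e :: "real^'n" where e: "norm e = 1" using vector_choose_size[OF zero_le_one] by blast
  then have "e \<noteq> 0" by auto
  obtain a where a: "a > 0" "y + a *\<^sub>R e \<in> frontier V"
    using frontier_hit[OF assms(1-3) \<open>e \<noteq> 0\<close>] by blast
  obtain b where b: "b > 0" "y + b *\<^sub>R (-e) \<in> frontier V" 
    using frontier_hit[OF assms(1-3), of "-e"] \<open>e \<noteq> 0\<close> by auto
  define m where "m = max (\<psi> (y + a *\<^sub>R e)) (\<psi> (y + b *\<^sub>R (-e)))"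
  have "convex {z. \<psi> z \<le> m}" using assms(4) by (simp add: quasi_convex_def)
  then have "(b/(a+b)) *\<^sub>R (y + a *\<^sub>R e) + (a/(a+b)) *\<^sub>R (y + b *\<^sub>R (-e)) \<in> {z. \<psi> z \<le> m}"
  proof (rule convexD)
    show "y + a *\<^sub>R e \<in> {z. \<psi> z \<le> m}" "y + b *\<^sub>R (-e) \<in> {z. \<psi> z \<le> m}"
      by (auto simp: m_def)
    show "0 \<le> b/(a+b)" "0 \<le> a/(a+b)" using a b by auto
    show "b/(a+b) + a/(a+b) = 1" using a b by (simp add: add_divide_distrib[symmetric])
  qed
  moreover have "(b/(a+b)) *\<^sub>R (y + a *\<^sub>R e) + (a/(a+b)) *\<^sub>R (y + b *\<^sub>R (-e)) = y"
  proof -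
    have "(b/(a+b)) *\<^sub>R (y + a *\<^sub>R e) + (a/(a+b)) *\<^sub>R (y + b *\<^sub>R (-e))
       = ((b/(a+b)) + (a/(a+b))) *\<^sub>R y + ((b/(a+b))*a - (a/(a+b))*b) *\<^sub>R e"
      by (simp add: algebra_simps)
    also have "\<dots> = y" using a b by (simp add: add_divide_distrib[symmetric] add.commute)
    finally show ?thesis .
  qed
  ultimately have "\<psi> y \<le> m" by simp
  moreover have "m < c" using assms(5) a b by (simp add: m_def)
  ultimately show ?thesis by simp
qed


theorem theorem3:
  fixes \<Omega> :: "(real^'n) set" and f :: "real^'n \<Rightarrow> real^'n"
  assumes "\<Omega> \<noteq> {}" and "bounded \<Omega>" and "open \<Omega>"
    and "C1_on f \<Omega>"
  shows "convex_hull_like f \<Omega> \<or>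
    (\<exists>X. open X \<and> X \<noteq> {} \<and> closure X \<subseteq> \<Omega> \<and>
       (\<forall>g :: real^'n \<Rightarrow> real^'n. continuous_on \<Omega> g \<and> C1_on g X \<longrightarrow>
          (\<exists>lam0::real. lam0 \<ge> 0 \<and> (\<forall>lam>lam0. \<exists>xh\<in>X.
              jacobian_det (\<lambda>y. g y + lam *\<^sub>R f y) xh = 0))))"
proof (cases "convex_hull_like f \<Omega>")
  case True
  then show ?thesis by simp
next
  case False
  note nc = False
  from assms(4) obtain F' where F': "\<forall>x\<in>\<Omega>. (f has_derivative blinfun_apply (F' x)) (at x)"
    by (auto simp: C1_on_def)
  have contf: "continuous_on \<Omega> f"
    using F' has_derivative_continuous continuous_at_imp_continuous_on by blast
  from nc obtain \<psi> where c\<psi>: "continuous_on UNIV \<psi>" and q\<psi>: "quasi_convex \<psi>"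
    and lim: "\<forall>xs\<in>frontier \<Omega>. Limsup (at xs within \<Omega>) (\<lambda>x. ereal (\<psi> (f x))) \<noteq> (SUP x\<in>\<Omega>. ereal (\<psi> (f x)))"
    unfolding convex_hull_like_def by blast
  define Sup where "Sup = (SUP x\<in>\<Omega>. ereal (\<psi> (f x)))"
  have cpf: "continuous_on \<Omega> (\<lambda>x. \<psi> (f x))"
    using continuous_on_compose2[OF c\<psi> contf] by auto
  have loc: "\<forall>y\<in>frontier \<Omega>. \<exists>e>0. \<exists>c. ereal c < Sup \<and> (\<forall>x\<in>\<Omega>. dist x y < e \<longrightarrow> \<psi> (f x) < c)"
  proof
    fix y assume y: "y \<in> frontier \<Omega>"
    have yn: "y \<notin> \<Omega>" using y assms(3) by (simp add: frontier_def interior_open)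
    have "Limsup (at y within \<Omega>) (\<lambda>x. ereal (\<psi> (f x))) \<le> Sup"
      unfolding Sup_def by (intro Limsup_bounded) (auto simp: eventually_at intro!: exI[of _ 1] SUP_upper)
    with lim y have "Limsup (at y within \<Omega>) (\<lambda>x. ereal (\<psi> (f x))) < Sup"
      unfolding Sup_def by (simp add: order_less_le)
    then obtain c where c1: "Limsup (at y within \<Omega>) (\<lambda>x. ereal (\<psi> (f x))) < ereal c"
      and c2: "ereal c < Sup" using ereal_dense2 by blast
    from Limsup_lessD[OF c1] obtain e where "e > 0"
      "\<forall>x\<in>\<Omega>. x \<noteq> y \<and> dist x y < e \<longrightarrow> ereal (\<psi> (f x)) < ereal c"
      by (auto simp: eventually_at)
    then show "\<exists>e>0. \<exists>c. ereal c < Sup \<and> (\<forall>x\<in>\<Omega>. dist x y < e \<longrightarrow> \<psi> (f x) < c)"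
      using c2 yn by (intro exI[of _ e] conjI exI[of _ c]) auto
  qed
  from bchoice[OF loc] obtain E where E: "\<forall>y\<in>frontier \<Omega>. E y > 0 \<and> (\<exists>c. ereal c < Sup \<and>
      (\<forall>x\<in>\<Omega>. dist x y < E y \<longrightarrow> \<psi> (f x) < c))" by blast
  then have "\<forall>y\<in>frontier \<Omega>. \<exists>c. E y > 0 \<and> ereal c < Sup \<and>
      (\<forall>x\<in>\<Omega>. dist x y < E y \<longrightarrow> \<psi> (f x) < c)" by blast
  from bchoice[OF this] obtain C where EC: "\<forall>y\<in>frontier \<Omega>. E y > 0 \<and> ereal (C y) < Sup \<and>
      (\<forall>x\<in>\<Omega>. dist x y < E y \<longrightarrow> \<psi> (f x) < C y)" by blast
  have cmpF: "compact (frontier \<Omega>)" using assms(2) compact_frontier_bounded by blast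
  have cov: "frontier \<Omega> \<subseteq> (\<Union>y\<in>frontier \<Omega>. ball y (E y))"
  proof
    fix y assume "y \<in> frontier \<Omega>"
    then have "y \<in> ball y (E y)" using EC by simp
    then show "y \<in> (\<Union>y\<in>frontier \<Omega>. ball y (E y))" using \<open>y \<in> frontier \<Omega>\<close> by blast
  qed
  obtain T where T: "T \<subseteq> frontier \<Omega>" "finite T" "frontier \<Omega> \<subseteq> (\<Union>y\<in>T. ball y (E y))"
    using compactE_image[OF cmpF _ cov] by (metis open_ball)
  obtain x1 where x1: "x1 \<in> \<Omega>" using assms(1) by blast
  define r where "r = Max (insert (\<psi> (f x1) - 1) (C ` T))"
  have rin: "r \<in> insert (\<psi> (f x1) - 1) (C ` T)" unfolding r_def using T(2) by (intro Max_in) auto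
  have "ereal (\<psi> (f x1)) \<le> Sup" unfolding Sup_def using x1 by (rule SUP_upper)
  moreover have "ereal (\<psi> (f x1) - 1) < ereal (\<psi> (f x1))" by simp
  ultimately have "ereal (\<psi> (f x1) - 1) < Sup" using order.strict_trans2 by blast
  then have r_lt: "ereal r < Sup"
    using rin EC T(1) by (auto simp del: ereal_less_eq)
  define U where "U = (\<Union>y\<in>T. ball y (E y))"
  have oU: "open U" unfolding U_def by auto
  have FU: "frontier \<Omega> \<subseteq> U" using T(3) U_def by simp
  have U_lt: "\<psi> (f x) < r" if "x \<in> \<Omega>" "x \<in> U" for x
  proof -
    from that obtain y where y: "y \<in> T" "dist y x < E y" unfolding U_def by auto
    then have "\<psi> (f x) < C y" using EC T(1) that(1) by (auto simp: dist_commute)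
    also have "C y \<le> r" unfolding r_def using T(2) y(1) by (intro Max_ge) auto
    finally show ?thesis .
  qed
  from r_lt obtain x0 where x0: "x0 \<in> \<Omega>" "r < \<psi> (f x0)"
    unfolding Sup_def by (auto simp: less_SUP_iff)
  define X where "X = {x\<in>\<Omega>. \<psi> (f x) > r}"
  have oX: "open X"
  proof -
    have "open (\<Omega> \<inter> (\<lambda>x. \<psi> (f x)) -` {r<..})"
      using continuous_open_preimage[OF cpf assms(3) open_greaterThan] .
    moreover have "\<Omega> \<inter> (\<lambda>x. \<psi> (f x)) -` {r<..} = X" by (auto simp: X_def)
    ultimately show ?thesis by simp
  qed
  have x0X: "x0 \<in> X" using x0 by (simp add: X_def)
  have XU: "X \<subseteq> closure \<Omega> - U" using U_lt closure_subset by (force simp: X_def)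
  have "closure \<Omega> - U \<subseteq> \<Omega>"
    using FU assms(3) by (auto simp: frontier_def interior_open)
  moreover have "closure X \<subseteq> closure \<Omega> - U"
    using XU oU by (intro closure_minimal) (auto intro: closed_Diff)
  ultimately have clX: "closure X \<subseteq> \<Omega>" by blast
  have frX: "\<psi> (f x) \<le> r" if "x \<in> frontier X" for x
  proof -
    have "x \<in> \<Omega>" "x \<notin> X" using that clX oX by (auto simp: frontier_def interior_open)
    then show ?thesis by (auto simp: X_def)
  qed
  have cX: "compact (closure X)"
    using assms(2) clX by (meson bounded_subset compact_closure closure_subset order_trans)
  define gap where "gap = \<psi> (f x0) - r"
  have gap: "gap > 0" using x0 by (simp add: gap_def)
  obtain A where A: "\<forall>x\<in>closure X. norm (f x) \<le> A"
  proof -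
    have "compact (f ` closure X)"
      using compact_continuous_image[OF continuous_on_subset[OF contf clX] cX] .
    then show ?thesis using that compact_imp_bounded bounded_iff by (metis imageI)
  qed
  have "uniformly_continuous_on (cball 0 (A+1)) \<psi>"
    by (rule compact_uniformly_continuous[OF continuous_on_subset[OF c\<psi>] compact_cball]) auto
  obtain d where d: "d > 0" "\<forall>x\<in>cball 0 (A+1). \<forall>x'\<in>cball 0 (A+1). dist x' x < d \<longrightarrow>
      dist (\<psi> x') (\<psi> x) < gap/2"
  proof -
    have "gap/2 > 0" using gap by simp
    with \<open>uniformly_continuous_on (cball 0 (A+1)) \<psi>\<close>
    show ?thesis unfolding uniformly_continuous_on_def using that by blast
  qed
  have "\<exists>X. open X \<and> X \<noteq> {} \<and> closure X \<subseteq> \<Omega> \<and>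
       (\<forall>g :: real^'n \<Rightarrow> real^'n. continuous_on \<Omega> g \<and> C1_on g X \<longrightarrow>
          (\<exists>lam0::real. lam0 \<ge> 0 \<and> (\<forall>lam>lam0. \<exists>xh\<in>X.
              jacobian_det (\<lambda>y. g y + lam *\<^sub>R f y) xh = 0)))"
  proof (intro exI[of _ X] conjI allI impI)
    show "open X" "X \<noteq> {}" "closure X \<subseteq> \<Omega>" using oX x0X clX by auto
    fix g :: "real^'n \<Rightarrow> real^'n"
    assume g: "continuous_on \<Omega> g \<and> C1_on g X"
    then obtain G where G: "\<forall>x\<in>X. (g has_derivative blinfun_apply (G x)) (at x)"
      by (auto simp: C1_on_def)
    obtain B where B: "B > 0" "\<forall>x\<in>closure X. norm (g x) \<le> B"
    proof -
      have "compact (g ` closure X)"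
        using compact_continuous_image[OF continuous_on_subset[OF conjunct1[OF g] clX] cX] .
      then show ?thesis using that compact_imp_bounded bounded_pos by (metis imageI)
    qed
    define m where "m = min d 1"
    have mpos: "m > 0" using d by (simp add: m_def)
    define lam0 where "lam0 = 2 * B / m"
    show "\<exists>lam0::real. lam0 \<ge> 0 \<and> (\<forall>lam>lam0. \<exists>xh\<in>X.
              jacobian_det (\<lambda>y. g y + lam *\<^sub>R f y) xh = 0)"
    proof (intro exI[of _ lam0] conjI allI impI)
      show "0 \<le> lam0" using B mpos by (simp add: lam0_def)
      fix lam :: real assume lam: "lam > lam0"
      have lpos: "lam > 0" using lam B mpos by (smt (verit) divide_pos_pos lam0_def)
      have lB: "B / lam < m"
      proof -
        have "2 * B < lam * m" using lam mpos by (simp add: lam0_def divide_less_eq mult.commute)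
        then have "B < m * lam" using B by (simp add: mult.commute)
        then show ?thesis using lpos by (simp add: divide_less_eq)
      qed
      show "\<exists>xh\<in>X. jacobian_det (\<lambda>y. g y + lam *\<^sub>R f y) xh = 0"
      proof (rule ccontr)
        assume nz: "\<not> (\<exists>xh\<in>X. jacobian_det (\<lambda>y. g y + lam *\<^sub>R f y) xh = 0)"
        define h where "h = (\<lambda>y. (1/lam) *\<^sub>R (g y + lam *\<^sub>R f y))"
        have hf: "h x - f x = (1/lam) *\<^sub>R g x" for x
          using lpos by (simp add: h_def algebra_simps)
        have close: "norm (h x - f x) < m" if "x \<in> closure X" for x
        proof -
          have "norm (h x - f x) = norm (g x) / lam" using lpos by (simp add: hf)
          also have "\<dots> \<le> B / lam" using B that lpos by (simp add: divide_right_mono)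
          finally show ?thesis using lB by simp
        qed
        have psiclose: "\<bar>\<psi> (h x) - \<psi> (f x)\<bar> < gap/2" if "x \<in> closure X" for x
        proof -
          have fx: "f x \<in> cball 0 (A+1)" using A that by force
          have "norm (h x) \<le> norm (f x) + norm (h x - f x)"
            by (metis add.commute diff_add_cancel norm_triangle_ineq)
          moreover have "norm (f x) \<le> A" using A that by blast
          ultimately have hx: "h x \<in> cball 0 (A+1)" using close[OF that] by (simp add: m_def)
          have "dist (h x) (f x) < d" using close[OF that] by (simp add: dist_norm m_def)
          then have "dist (\<psi> (h x)) (\<psi> (f x)) < gap/2" using d fx hx by blast
          then show ?thesis by (simp add: dist_real_def)
        qed
        have hcont: "continuous_on \<Omega> h"
          unfolding h_def using g contf by (intro continuous_intros) auto
        have hX: "h x \<in> interior (h ` X)" if x: "x \<in> X" for x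
        proof -
          define Dk where "Dk = (\<lambda>v. blinfun_apply (G x) v + lam *\<^sub>R blinfun_apply (F' x) v)"
          have xO: "x \<in> \<Omega>" using x clX closure_subset by blast
          have dk: "((\<lambda>y. g y + lam *\<^sub>R f y) has_derivative Dk) (at x)"
            unfolding Dk_def using G F' x xO by (intro derivative_intros) auto
          have "jacobian_det (\<lambda>y. g y + lam *\<^sub>R f y) x = det (matrix Dk)"
            unfolding jacobian_det_def using frechet_derivative_at[OF dk] by simp
          then have "det (matrix Dk) \<noteq> 0" using nz x by auto
          moreover have lDk: "linear Dk" using dk has_derivative_linear by blast
          ultimately obtain g' where g': "bounded_linear g'" "Dk \<circ> g' = id"
            using right_inv_det by blast
          have dh: "(h has_derivative (\<lambda>v. (1/lam) *\<^sub>R Dk v)) (at x)"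
            unfolding h_def by (intro derivative_intros dk)
          have bl: "bounded_linear (\<lambda>v. lam *\<^sub>R g' v)"
            using g'(1) by (intro bounded_linear_intros)
          have "(\<lambda>v. (1/lam) *\<^sub>R Dk v) \<circ> (\<lambda>v. lam *\<^sub>R g' v) = id"
          proof
            fix v
            have "Dk (lam *\<^sub>R g' v) = lam *\<^sub>R Dk (g' v)" using lDk by (simp add: linear_cmul)
            also have "Dk (g' v) = v" using g'(2) by (metis comp_apply id_apply)
            finally show "((\<lambda>v. (1/lam) *\<^sub>R Dk v) \<circ> (\<lambda>v. lam *\<^sub>R g' v)) v = id v"
              using lpos by simp
          qed
          then show ?thesis
            using sussmann_open_mapping[OF oX continuous_on_subset[OF hcont] x dh bl, of X]
              clX closure_subset oX x by (auto simp: interior_open)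
        qed
        have "h ` X = interior (h ` X)" using hX interior_subset by blast
        then have oV: "open (h ` X)" by (metis open_interior)
        have cV: "compact (h ` closure X)"
          using compact_continuous_image[OF continuous_on_subset[OF hcont clX] cX] .
        have bV: "bounded (h ` X)"
          by (rule bounded_subset[OF compact_imp_bounded[OF cV] image_mono[OF closure_subset]])
        have frV: "\<forall>p\<in>frontier (h ` X). \<psi> p < r + gap/2"
        proof
          fix p assume p: "p \<in> frontier (h ` X)"
          have "closure (h ` X) \<subseteq> h ` closure X"
            by (rule closure_minimal[OF image_mono[OF closure_subset] compact_imp_closed[OF cV]])
          moreover have "p \<in> closure (h ` X)" "p \<notin> h ` X"
            using p oV by (auto simp: frontier_def interior_open)
          ultimately obtain x where x: "x \<in> closure X" "x \<notin> X" "p = h x" by blast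
          then have "x \<in> frontier X" using oX by (simp add: frontier_def interior_open)
          then have "\<psi> (f x) \<le> r" by (rule frX)
          then show "\<psi> p < r + gap/2" unfolding x(3) using abs_less_iff[THEN iffD1, OF psiclose[OF x(1)]] by linarith
        qed
        have "\<psi> (h x0) < r + gap/2"
          using qc_bound[OF oV bV _ q\<psi> frV] x0X by blast
        moreover have "\<psi> (h x0) > r + gap/2"
        proof -
          have "x0 \<in> closure X" using x0X closure_subset by blast
          from abs_less_iff[THEN iffD1, OF psiclose[OF this]]
          have "\<psi> (f x0) - \<psi> (h x0) < gap/2" by linarith
          then show ?thesis by (simp add: gap_def field_simps)
        qed
        ultimately show False by simp
      qed
    qed
  qed
  then show ?thesis by (rule disjI2)
qed

end
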